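(* Let $t\subset\mathbb{R}^3$ be a tetrahedron with vertices numbered $0,1,2,3$ and let $p\geq0$ be an integer. For $i=0,\dots,3$: - $\lambda_i$ is the $i$-th barycentric coordinate; - $\bm{\nu}_i$ is the unit normal of the face opposite vertex $i$; - $j,l,m$ denote the three indices in $\{0,1,2,3\}\setminus\{i\}$. Define $$\Sigma^c_{t,p}:=\sum_{i=0}^3\mathcal{P}_{p-3}(t)\,\lambda_j\lambda_l\lambda_m\,\bm{\nu}_i .$$ Then $$\Sigma^c_{t,p}=\mathring{\mathcal{P}}_p\Lambda^1(t):=\{\bm{E}\in(\mathcal{P}_p(t))^3:\ \bm{E}\times\bm{\nu}=0 \text{ on }\partial t\},$$ the space of degree-$p$ polynomial vector fields with vanishing tangential components on the boundary of $t$.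
   Context: $\mathcal{P}_r(t)$ denotes polynomials of degree at most $r$ on $t$, with $\mathcal{P}_r=\{0\}$ for $r<0$. $\bm{\nu}$ denotes the unit outward normal on $\partial t$. *)

theory Defs
  imports "HOL-Analysis.Analysis"
begin

text \<open>Polynomial functions on R^3 of total degree at most r (r an integer; for r < 0
  the index set is empty, so the only such function is 0).\<close>
definition poly3 :: "int \<Rightarrow> (real^3 \<Rightarrow> real) \<Rightarrow> bool" where
  "poly3 r f \<longleftrightarrow> (\<exists>c :: nat \<times> nat \<times> nat \<Rightarrow> real.
     f = (\<lambda>x. \<Sum>(a,b,d)\<in>{(a,b,d). int (a + b + d) \<le> r}.
                 c (a,b,d) * (x$1)^a * (x$2)^b * (x$3)^d))"

definition vpoly3 :: "int \<Rightarrow> (real^3 \<Rightarrow> real^3) \<Rightarrow> bool" where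
  "vpoly3 r E \<longleftrightarrow> (\<forall>k. poly3 r (\<lambda>x. E x $ k))"

definition tetrahedron :: "(nat \<Rightarrow> real^3) \<Rightarrow> bool" where
  "tetrahedron v \<longleftrightarrow> inj_on v {..<4} \<and> \<not> affine_dependent (v ` {..<4})"

definition bary :: "(nat \<Rightarrow> real^3) \<Rightarrow> nat \<Rightarrow> real^3 \<Rightarrow> real" where
  "bary v i x = (THE l :: nat \<Rightarrow> real. (\<forall>k\<ge>4. l k = 0) \<and> (\<Sum>k<4. l k) = 1
                      \<and> (\<Sum>k<4. l k *\<^sub>R v k) = x) i"

definition face :: "(nat \<Rightarrow> real^3) \<Rightarrow> nat \<Rightarrow> (real^3) set" where
  "face v i = convex hull (v ` ({..<4} - {i}))"

text \<open>Unit outward normal of the face opposite vertex i.\<close>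
definition face_normal :: "(nat \<Rightarrow> real^3) \<Rightarrow> nat \<Rightarrow> real^3" where
  "face_normal v i = (THE n. norm n = 1
       \<and> (\<forall>j k. j < 4 \<and> k < 4 \<and> j \<noteq> i \<and> k \<noteq> i \<longrightarrow> n \<bullet> (v j - v k) = 0)
       \<and> n \<bullet> (v i - v (if i = 0 then 1 else 0)) < 0)"

definition Sigma_c :: "(nat \<Rightarrow> real^3) \<Rightarrow> nat \<Rightarrow> (real^3 \<Rightarrow> real^3) set" where
  "Sigma_c v p = {E. \<exists>q :: nat \<Rightarrow> real^3 \<Rightarrow> real. (\<forall>i<4. poly3 (int p - 3) (q i)) \<and>
      E = (\<lambda>x. \<Sum>i<4. (q i x * (\<Prod>k\<in>{..<4} - {i}. bary v k x)) *\<^sub>R face_normal v i)}"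

definition P_ring_Lambda1 :: "(nat \<Rightarrow> real^3) \<Rightarrow> nat \<Rightarrow> (real^3 \<Rightarrow> real^3) set" where
  "P_ring_Lambda1 v p = {E. vpoly3 (int p) E \<and>
      (\<forall>i<4. \<forall>x\<in>face v i. cross3 (E x) (face_normal v i) = 0)}"

end

theory Submission
  imports Defs "HOL-Computational_Algebra.Polynomial"
begin
definition mono3 :: "nat \<times> nat \<times> nat \<Rightarrow> real^3 \<Rightarrow> real" where
  "mono3 \<alpha> x = (case \<alpha> of (a,b,d) \<Rightarrow> (x$1)^a * (x$2)^b * (x$3)^d)"
definition deg3 :: "nat \<times> nat \<times> nat \<Rightarrow> nat" where
  "deg3 \<alpha> = (case \<alpha> of (a,b,d) \<Rightarrow> a+b+d)"
definition Sdeg :: "int \<Rightarrow> (nat \<times> nat \<times> nat) set" where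
  "Sdeg r = {\<alpha>. int (deg3 \<alpha>) \<le> r}"

lemma finite_Sdeg: "finite (Sdeg r)"
proof -
  have "Sdeg r \<subseteq> {..nat r} \<times> {..nat r} \<times> {..nat r}"
    by (auto simp: Sdeg_def deg3_def)
  then show ?thesis by (rule finite_subset) auto
qed

lemma poly3_alt: "poly3 r f \<longleftrightarrow> (\<exists>c. f = (\<lambda>x. \<Sum>\<alpha>\<in>Sdeg r. c \<alpha> * mono3 \<alpha> x))"
proof -
  have S: "{(a,b,d). int (a + b + d) \<le> r} = Sdeg r"
    by (auto simp: Sdeg_def deg3_def)
  have "(\<Sum>(a,b,d)\<in>Sdeg r. c (a,b,d) * (x$1)^a * (x$2)^b * (x$3)^d) = (\<Sum>\<alpha>\<in>Sdeg r. c \<alpha> * mono3 \<alpha> x)" for c x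
    by (rule sum.cong) (auto simp: mono3_def)
  then show ?thesis unfolding poly3_def S by simp
qed

lemma poly3_sumI:
  assumes "finite I" "\<And>i. i \<in> I \<Longrightarrow> int (deg3 (\<kappa> i)) \<le> r"
  shows "poly3 r (\<lambda>x. \<Sum>i\<in>I. w i * mono3 (\<kappa> i) x)"
proof -
  define c where "c \<alpha> = (\<Sum>i\<in>{i\<in>I. \<kappa> i = \<alpha>}. w i)" for \<alpha>
  have "(\<Sum>\<alpha>\<in>Sdeg r. c \<alpha> * mono3 \<alpha> x) = (\<Sum>i\<in>I. w i * mono3 (\<kappa> i) x)" for x
  proof -
    have "(\<Sum>\<alpha>\<in>Sdeg r. c \<alpha> * mono3 \<alpha> x) = (\<Sum>\<alpha>\<in>Sdeg r. \<Sum>i\<in>{i\<in>I. \<kappa> i = \<alpha>}. w i * mono3 (\<kappa> i) x)"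
      unfolding c_def sum_distrib_right by (rule sum.cong) auto
    also have "\<dots> = (\<Sum>i\<in>I. w i * mono3 (\<kappa> i) x)"
      by (rule sum.group) (use assms finite_Sdeg in \<open>auto simp: Sdeg_def\<close>)
    finally show ?thesis .
  qed
  then show ?thesis unfolding poly3_alt by metis
qed

lemma poly3_E: assumes "poly3 r f" obtains c where "\<And>x. f x = (\<Sum>\<alpha>\<in>Sdeg r. c \<alpha> * mono3 \<alpha> x)"
proof -
  from assms obtain c where "f = (\<lambda>x. \<Sum>\<alpha>\<in>Sdeg r. c \<alpha> * mono3 \<alpha> x)" unfolding poly3_alt by blast
  then show thesis using that by simp
qed

lemma poly3_zero: "poly3 r (\<lambda>x. 0)"
  using poly3_sumI[of "{}" _ r] by simp

lemma poly3_add: assumes "poly3 r f" "poly3 r g" shows "poly3 r (\<lambda>x. f x + g x)"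
proof -
  obtain c where c: "\<And>x. f x = (\<Sum>\<alpha>\<in>Sdeg r. c \<alpha> * mono3 \<alpha> x)" using poly3_E[OF assms(1)] by blast
  obtain d where d: "\<And>x. g x = (\<Sum>\<alpha>\<in>Sdeg r. d \<alpha> * mono3 \<alpha> x)" using poly3_E[OF assms(2)] by blast
  show ?thesis unfolding poly3_alt
    by (rule exI[where x="\<lambda>\<alpha>. c \<alpha> + d \<alpha>"]) (simp add: c d sum.distrib distrib_right)
qed

lemma poly3_cmult: assumes "poly3 r f" shows "poly3 r (\<lambda>x. a * f x)"
proof -
  obtain c where c: "\<And>x. f x = (\<Sum>\<alpha>\<in>Sdeg r. c \<alpha> * mono3 \<alpha> x)" using poly3_E[OF assms(1)] by blast
  show ?thesis unfolding poly3_alt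
    by (rule exI[where x="\<lambda>\<alpha>. a * c \<alpha>"]) (simp add: c sum_distrib_left mult.assoc)
qed

lemma poly3_neg: assumes "poly3 r f" shows "poly3 r (\<lambda>x. - f x)"
  using poly3_cmult[OF assms, of "-1"] by simp

lemma poly3_diff: assumes "poly3 r f" "poly3 r g" shows "poly3 r (\<lambda>x. f x - g x)"
  using poly3_add[OF assms(1) poly3_neg[OF assms(2)]] by simp

lemma poly3_mono: assumes "poly3 r f" "r \<le> s" shows "poly3 s f"
proof -
  obtain c where c: "\<And>x. f x = (\<Sum>\<alpha>\<in>Sdeg r. c \<alpha> * mono3 \<alpha> x)" using poly3_E[OF assms(1)] by blast
  have "poly3 s (\<lambda>x. \<Sum>\<alpha>\<in>Sdeg r. c \<alpha> * mono3 (id \<alpha>) x)"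
    by (rule poly3_sumI) (use assms(2) finite_Sdeg in \<open>auto simp: Sdeg_def\<close>)
  then show ?thesis by (simp add: c[symmetric])
qed

lemma mono3_add: "mono3 (a,b,d) x * mono3 (a',b',d') x = mono3 (a+a',b+b',d+d') x"
  by (simp add: mono3_def power_add)

lemma poly3_mult: assumes "poly3 r f" "poly3 s g" shows "poly3 (r + s) (\<lambda>x. f x * g x)"
proof -
  obtain c where c: "\<And>x. f x = (\<Sum>\<alpha>\<in>Sdeg r. c \<alpha> * mono3 \<alpha> x)" using poly3_E[OF assms(1)] by blast
  obtain d where d: "\<And>x. g x = (\<Sum>\<alpha>\<in>Sdeg s. d \<alpha> * mono3 \<alpha> x)" using poly3_E[OF assms(2)] by blast
  define \<kappa> where "\<kappa> = (\<lambda>((a,b,e),(a',b',e')). (a+a'::nat,b+b'::nat,e+e'::nat))"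
  have "f x * g x = (\<Sum>p\<in>Sdeg r \<times> Sdeg s. (c (fst p) * d (snd p)) * mono3 (\<kappa> p) x)" for x
  proof -
    have "f x * g x = (\<Sum>\<alpha>\<in>Sdeg r. \<Sum>\<beta>\<in>Sdeg s. (c \<alpha> * mono3 \<alpha> x) * (d \<beta> * mono3 \<beta> x))"
      by (simp add: c d sum_product)
    also have "\<dots> = (\<Sum>p\<in>Sdeg r \<times> Sdeg s. (c (fst p) * mono3 (fst p) x) * (d (snd p) * mono3 (snd p) x))"
      by (simp add: sum.cartesian_product case_prod_beta)
    also have "\<dots> = (\<Sum>p\<in>Sdeg r \<times> Sdeg s. (c (fst p) * d (snd p)) * mono3 (\<kappa> p) x)"
      by (rule sum.cong) (auto simp: \<kappa>_def mono3_add[symmetric] mult_ac)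
    finally show ?thesis .
  qed
  moreover have "poly3 (r+s) (\<lambda>x. \<Sum>p\<in>Sdeg r \<times> Sdeg s. (c (fst p) * d (snd p)) * mono3 (\<kappa> p) x)"
    by (rule poly3_sumI) (use finite_Sdeg in \<open>auto simp: Sdeg_def \<kappa>_def deg3_def\<close>)
  ultimately show ?thesis by simp
qed

lemma poly3_const: assumes "0 \<le> r" shows "poly3 r (\<lambda>x. a)"
proof -
  have "poly3 r (\<lambda>x. \<Sum>i\<in>{()}. a * mono3 (0,0,0) x)"
    by (rule poly3_sumI) (use assms in \<open>auto simp: deg3_def\<close>)
  then show ?thesis by (simp add: mono3_def)
qed

lemma poly3_coord: assumes "1 \<le> r" shows "poly3 r (\<lambda>x. x $ k)"
proof -
  have k: "k = 1 \<or> k = 2 \<or> k = 3" using exhaust_3 by blast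
  have "poly3 r (\<lambda>x. \<Sum>i\<in>{()}. 1 * mono3 (if k = 1 then (1,0,0) else if k = 2 then (0,1,0) else (0,0,1)) x)"
    by (rule poly3_sumI) (use assms in \<open>auto simp: deg3_def\<close>)
  then show ?thesis using k by (auto simp: mono3_def)
qed

lemma poly3_sum: assumes "finite A" "\<And>i. i \<in> A \<Longrightarrow> poly3 r (f i)" shows "poly3 r (\<lambda>x. \<Sum>i\<in>A. f i x)"
  using assms by (induction A rule: finite_induct) (auto intro: poly3_zero poly3_add)

lemma poly3_pow: assumes "poly3 r f" "0 \<le> r" shows "poly3 (int n * r) (\<lambda>x. f x ^ n)"
proof (induction n)
  case 0 then show ?case by (simp add: poly3_const)
next
  case (Suc n)
  have "poly3 (int n * r + r) (\<lambda>x. f x ^ n * f x)" by (rule poly3_mult[OF Suc assms(1)])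
  then show ?case by (simp add: algebra_simps)
qed

lemma poly3_prod: assumes "finite A" "\<And>i. i \<in> A \<Longrightarrow> poly3 1 (f i)"
  shows "poly3 (int (card A)) (\<lambda>x. \<Prod>i\<in>A. f i x)"
  using assms
proof (induction A rule: finite_induct)
  case empty then show ?case by (simp add: poly3_const)
next
  case (insert a A)
  have "poly3 (1 + int (card A)) (\<lambda>x. f a x * (\<Prod>i\<in>A. f i x))"
    by (rule poly3_mult) (use insert in auto)
  then show ?case using insert by simp
qed

lemma poly3_compose:
  assumes "poly3 r f" "\<And>k. poly3 1 (\<lambda>x. T x $ k)"
  shows "poly3 r (\<lambda>x. f (T x))"
proof -
  obtain c where c: "\<And>x. f x = (\<Sum>\<alpha>\<in>Sdeg r. c \<alpha> * mono3 \<alpha> x)" using poly3_E[OF assms(1)] by blast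
  have "poly3 r (\<lambda>x. \<Sum>\<alpha>\<in>Sdeg r. c \<alpha> * mono3 \<alpha> (T x))"
  proof (rule poly3_sum[OF finite_Sdeg])
    fix \<alpha> assume a: "\<alpha> \<in> Sdeg r"
    obtain a b d where ad: "\<alpha> = (a,b,d)" by (cases \<alpha>) auto
    have p: "poly3 (int a * 1 + int b * 1 + int d * 1) (\<lambda>x. (T x $ 1)^a * (T x $ 2)^b * (T x $ 3)^d)"
      by (intro poly3_mult poly3_pow assms(2)) auto
    have "poly3 r (\<lambda>x. (T x $ 1)^a * (T x $ 2)^b * (T x $ 3)^d)"
      by (rule poly3_mono[OF p]) (use a ad in \<open>auto simp: Sdeg_def deg3_def\<close>)
    then show "poly3 r (\<lambda>x. c \<alpha> * mono3 \<alpha> (T x))"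
      using poly3_cmult ad by (simp add: mono3_def)
  qed
  then show ?thesis by (simp add: c)
qed

lemma poly3_affine: "poly3 1 (\<lambda>x. w \<bullet> x + b)"
proof -
  have "poly3 1 (\<lambda>x. (w$1 * x$1 + w$2 * x$2 + w$3 * x$3) + b)"
    by (intro poly3_add poly3_cmult poly3_coord poly3_const) auto
  then show ?thesis by (simp add: inner_vec_def sum_3)
qed

definition z0 :: "real^3 \<Rightarrow> real^3" where "z0 z = (\<chi> i. if i = 1 then 0 else z$i)"

lemma z0_nth[simp]: "z0 z $ 1 = 0" "z0 z $ 2 = z $ 2" "z0 z $ 3 = z $ 3"
  by (auto simp: z0_def)

lemma poly3_decomp1:
  assumes "poly3 r h"
  shows "\<exists>A. poly3 (r - 1) A \<and> (\<forall>z. h z = h (z0 z) + z$1 * A z)"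
proof -
  obtain c where c: "\<And>x. h x = (\<Sum>\<alpha>\<in>Sdeg r. c \<alpha> * mono3 \<alpha> x)" using poly3_E[OF assms] by blast
  define dec where "dec = (\<lambda>(a::nat,b::nat,d::nat). (a - 1, b, d))"
  define S1 where "S1 = {\<alpha>\<in>Sdeg r. fst \<alpha> \<noteq> 0}"
  define A where "A = (\<lambda>z. \<Sum>\<alpha>\<in>S1. c \<alpha> * mono3 (dec \<alpha>) z)"
  have A: "poly3 (r - 1) A"
    unfolding A_def
    by (rule poly3_sumI) (use finite_Sdeg in \<open>auto simp: S1_def Sdeg_def dec_def deg3_def\<close>)
  have m0: "mono3 \<alpha> (z0 z) = (if fst \<alpha> = 0 then mono3 \<alpha> z else 0)" for \<alpha> z
    by (cases \<alpha>) (auto simp: mono3_def)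
  have m1: "fst \<alpha> \<noteq> 0 \<Longrightarrow> mono3 \<alpha> z = z$1 * mono3 (dec \<alpha>) z" for \<alpha> z
    by (cases \<alpha>) (auto simp: mono3_def dec_def simp flip: power_Suc)
  have "h z = h (z0 z) + z$1 * A z" for z
  proof -
    have "h z = (\<Sum>\<alpha>\<in>Sdeg r. (if fst \<alpha> = 0 then c \<alpha> * mono3 \<alpha> z else 0)) +
                (\<Sum>\<alpha>\<in>Sdeg r. (if fst \<alpha> \<noteq> 0 then c \<alpha> * mono3 \<alpha> z else 0))"
      unfolding c sum.distrib[symmetric] by (rule sum.cong) auto
    also have "(\<Sum>\<alpha>\<in>Sdeg r. (if fst \<alpha> = 0 then c \<alpha> * mono3 \<alpha> z else 0)) = h (z0 z)"
      unfolding c m0 by (rule sum.cong) auto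
    also have "(\<Sum>\<alpha>\<in>Sdeg r. (if fst \<alpha> \<noteq> 0 then c \<alpha> * mono3 \<alpha> z else 0)) = (\<Sum>\<alpha>\<in>S1. c \<alpha> * mono3 \<alpha> z)"
      unfolding S1_def by (simp add: sum.inter_filter finite_Sdeg)
    also have "\<dots> = z$1 * A z"
      unfolding A_def sum_distrib_left by (rule sum.cong) (auto simp: S1_def m1)
    finally show ?thesis .
  qed
  with A show ?thesis by blast
qed

lemma poly3_line:
  assumes "poly3 r f"
  shows "\<exists>P. \<forall>t. f (c + t *\<^sub>R d) = poly P t"
proof -
  obtain a where a: "\<And>x. f x = (\<Sum>\<alpha>\<in>Sdeg r. a \<alpha> * mono3 \<alpha> x)" using poly3_E[OF assms] by blast
  define L where "L k = [:c$k, d$k:]" for k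
  define P where "P = (\<Sum>\<alpha>\<in>Sdeg r. smult (a \<alpha>) (case \<alpha> of (i,j,l) \<Rightarrow> L 1 ^ i * L 2 ^ j * L 3 ^ l))"
  have "f (c + t *\<^sub>R d) = poly P t" for t
    unfolding a P_def poly_sum
    by (rule sum.cong) (auto simp: mono3_def L_def algebra_simps split: prod.splits)
  then show ?thesis by blast
qed

lemma poly3_zero_on_ball:
  assumes "poly3 r f" "e > 0" "\<And>y. dist c y < e \<Longrightarrow> f y = 0"
  shows "f x = 0"
proof -
  obtain P where P: "\<And>t. f (c + t *\<^sub>R (x - c)) = poly P t" using poly3_line[OF assms(1)] by blast
  define \<delta> where "\<delta> = e / (norm (x - c) + 1)"
  have \<delta>: "\<delta> > 0" unfolding \<delta>_def by (rule divide_pos_pos[OF assms(2)]) (simp add: add_nonneg_pos)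
  have "{0<..<\<delta>} \<subseteq> {t. poly P t = 0}"
  proof
    fix t assume t: "t \<in> {0<..<\<delta>}"
    have "dist c (c + t *\<^sub>R (x - c)) = t * norm (x - c)" using t by (simp add: dist_norm)
    also have "\<dots> \<le> t * (norm (x - c) + 1)" using t by (intro mult_left_mono) auto
    also have "\<dots> < \<delta> * (norm (x - c) + 1)" using t by (intro mult_strict_right_mono) (auto simp: add_nonneg_pos)
    also have "\<dots> = e" unfolding \<delta>_def by (smt (verit) norm_ge_zero nonzero_divide_eq_eq)
    finally show "t \<in> {t. poly P t = 0}" using assms(3) P by (metis mem_Collect_eq)
  qed
  then have "infinite {t. poly P t = 0}" using \<delta> infinite_Ioo_iff infinite_super by blast
  then have "P = 0" using poly_roots_finite by blast
  then show ?thesis using P[of 1] by simp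
qed

lemma four_eq:
  assumes "p<4" "q<4" "r<4" "s<4" "distinct [p,q,r,s]"
  shows "{..<4::nat} = {p,q,r,s}"
proof -
  have "card {p,q,r,s} = 4" using assms(5) distinct_card[OF assms(5)] by simp
  moreover have "{p,q,r,s} \<subseteq> {..<4::nat}" using assms by auto
  ultimately show ?thesis by (metis card_lessThan card_subset_eq finite_lessThan)
qed

lemma tri_nz:
  assumes T: "tetrahedron v" and pq: "p<4" "q<4" "r<4" "s<4" and dist: "distinct [p,q,r,s]"
  shows "(v q - v p) \<bullet> (cross3 (v r - v p) (v s - v p)) \<noteq> 0"
proof
  assume D0: "(v q - v p) \<bullet> (cross3 (v r - v p) (v s - v p)) = 0"
  let ?A = "vector [v q - v p, v r - v p, v s - v p] :: real^3^3"
  have "det ?A = 0" using D0 by (simp add: dot_cross_det)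
  then have "\<not> invertible ?A" by (simp add: invertible_det_nz)
  then obtain c i where c: "(\<Sum>i\<in>UNIV. c i *s row i ?A) = 0" "c i \<noteq> 0"
    unfolding invertible_right_inverse matrix_right_invertible_independent_rows by blast
  have rows: "row 1 ?A = v q - v p" "row 2 ?A = v r - v p" "row 3 ?A = v s - v p"
    by (simp_all add: row_def vec_eq_iff)
  have hc: "c 1 *\<^sub>R (v q - v p) + c 2 *\<^sub>R (v r - v p) + c 3 *\<^sub>R (v s - v p) = 0"
    using c(1) by (simp add: sum_3 rows scalar_mult_eq_scaleR)
  have inj: "inj_on v {..<4}" and ind: "\<not> affine_dependent (v ` {..<4})" using T by (auto simp: tetrahedron_def)
  have dv: "v p \<noteq> v q" "v p \<noteq> v r" "v p \<noteq> v s" "v q \<noteq> v r" "v q \<noteq> v s" "v r \<noteq> v s"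
    using inj pq dist by (auto dest: inj_onD)
  have S: "v ` {..<4} = {v p, v q, v r, v s}" using four_eq[OF pq dist] by auto
  define U where "U y = (if y = v q then c 1 else if y = v r then c 2 else if y = v s then c 3
      else if y = v p then -(c 1 + c 2 + c 3) else 0)" for y
  have "sum U (v ` {..<4}) = 0" unfolding S using dv by (simp add: U_def)
  moreover have "(\<Sum>y\<in>v ` {..<4}. U y *\<^sub>R y) = 0"
  proof -
    have "(\<Sum>y\<in>v ` {..<4}. U y *\<^sub>R y) = c 1 *\<^sub>R (v q - v p) + c 2 *\<^sub>R (v r - v p) + c 3 *\<^sub>R (v s - v p)"
      unfolding S using dv by (simp add: U_def algebra_simps)
    then show ?thesis using hc by simp
  qed
  moreover have "\<exists>y\<in>v ` {..<4}. U y \<noteq> 0"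
  proof -
    have "i = 1 \<or> i = 2 \<or> i = 3" using exhaust_3 by blast
    then show ?thesis unfolding S using c(2) dv by (auto simp: U_def)
  qed
  ultimately have "affine_dependent (v ` {..<4})"
    using affine_dependent_explicit_finite[of "v ` {..<4}"] by blast
  with ind show False by simp
qed

lemma cramer: fixes a b c y :: "real^3"
  shows "(a \<bullet> cross3 b c) *\<^sub>R y = (y \<bullet> cross3 b c) *\<^sub>R a + (y \<bullet> cross3 c a) *\<^sub>R b + (y \<bullet> cross3 a b) *\<^sub>R c"
  by (simp add: cross3_simps forall_3)
lemma cyc: fixes a b c :: "real^3" shows "b \<bullet> cross3 c a = a \<bullet> cross3 b c" "c \<bullet> cross3 a b = a \<bullet> cross3 b c"
  by (simp_all add: cross3_simps)
lemma sum4: "(\<Sum>k<4::nat. f k) = f 0 + f 1 + f 2 + (f 3::'a::comm_monoid_add)"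
  by (simp add: eval_nat_numeral)

definition Dv :: "(nat \<Rightarrow> real^3) \<Rightarrow> real" where
  "Dv v = (v 1 - v 0) \<bullet> cross3 (v 2 - v 0) (v 3 - v 0)"
definition wv :: "(nat \<Rightarrow> real^3) \<Rightarrow> nat \<Rightarrow> real^3" where
  "wv v k = (if k = 1 then cross3 (v 2 - v 0) (v 3 - v 0) else if k = 2 then cross3 (v 3 - v 0) (v 1 - v 0)
     else if k = 3 then cross3 (v 1 - v 0) (v 2 - v 0) else 0)"
definition lam :: "(nat \<Rightarrow> real^3) \<Rightarrow> nat \<Rightarrow> real^3 \<Rightarrow> real" where
  "lam v k x = (if k = 1 \<or> k = 2 \<or> k = 3 then ((x - v 0) \<bullet> wv v k) / Dv v
     else if k = 0 then 1 - ((x - v 0) \<bullet> wv v 1) / Dv v - ((x - v 0) \<bullet> wv v 2) / Dv v - ((x - v 0) \<bullet> wv v 3) / Dv v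
     else 0)"

lemma Dv_nz: "tetrahedron v \<Longrightarrow> Dv v \<noteq> 0"
  unfolding Dv_def by (rule tri_nz) auto

lemma lam_sum: "(\<Sum>k<4. lam v k x) = 1"
  by (simp add: sum4 lam_def)

lemma lam_comb: assumes "Dv v \<noteq> 0" shows "(\<Sum>k<4. lam v k x *\<^sub>R v k) = x"
proof -
  let ?a = "v 1 - v 0" and ?b = "v 2 - v 0" and ?c = "v 3 - v 0"
  have cr: "Dv v *\<^sub>R (x - v 0) = ((x - v 0) \<bullet> wv v 1) *\<^sub>R ?a + ((x - v 0) \<bullet> wv v 2) *\<^sub>R ?b + ((x - v 0) \<bullet> wv v 3) *\<^sub>R ?c"
    using cramer[of ?a ?b ?c "x - v 0"] unfolding Dv_def by (simp add: wv_def)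
  have e: "x - v 0 = lam v 1 x *\<^sub>R ?a + lam v 2 x *\<^sub>R ?b + lam v 3 x *\<^sub>R ?c"
  proof -
    have "x - v 0 = (1 / Dv v) *\<^sub>R (Dv v *\<^sub>R (x - v 0))" using assms by simp
    also have "\<dots> = lam v 1 x *\<^sub>R ?a + lam v 2 x *\<^sub>R ?b + lam v 3 x *\<^sub>R ?c"
      unfolding cr scaleR_add_right scaleR_scaleR by (simp add: lam_def)
    finally show ?thesis .
  qed
  have l0: "lam v 0 x = 1 - lam v 1 x - lam v 2 x - lam v 3 x" by (simp add: lam_def)
  have "(\<Sum>k<4. lam v k x *\<^sub>R v k) = v 0 + (lam v 1 x *\<^sub>R ?a + lam v 2 x *\<^sub>R ?b + lam v 3 x *\<^sub>R ?c)"
    unfolding sum4 l0 by (simp add: scaleR_diff_left scaleR_diff_right)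
  then show ?thesis by (metis e add.commute diff_add_cancel)
qed

lemma lam_uniq:
  assumes D: "Dv v \<noteq> 0" and l: "(\<Sum>k<4. l k) = 1" "(\<Sum>k<4. l k *\<^sub>R v k) = x" and k: "k < 4"
  shows "l k = lam v k x"
proof -
  let ?a = "v 1 - v 0" and ?b = "v 2 - v 0" and ?c = "v 3 - v 0"
  have l0: "l 0 = 1 - l 1 - l 2 - l 3" using l(1) unfolding sum4 by simp
  have "x = v 0 + (l 1 *\<^sub>R ?a + l 2 *\<^sub>R ?b + l 3 *\<^sub>R ?c)"
    using l(2) unfolding sum4 l0 by (auto simp: algebra_simps)
  then have xe: "x - v 0 = l 1 *\<^sub>R ?a + l 2 *\<^sub>R ?b + l 3 *\<^sub>R ?c" by simp
  have dots: "?a \<bullet> cross3 ?b ?c = Dv v" "?b \<bullet> cross3 ?c ?a = Dv v" "?c \<bullet> cross3 ?a ?b = Dv v"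
    unfolding Dv_def by (simp_all only: cyc)
  have z: "?b \<bullet> cross3 ?b ?c = 0" "?c \<bullet> cross3 ?b ?c = 0" "?a \<bullet> cross3 ?c ?a = 0" "?c \<bullet> cross3 ?c ?a = 0"
      "?a \<bullet> cross3 ?a ?b = 0" "?b \<bullet> cross3 ?a ?b = 0"
    by (simp_all only: dot_cross_self)
  have wv: "wv v 1 = cross3 ?b ?c" "wv v 2 = cross3 ?c ?a" "wv v 3 = cross3 ?a ?b" by (simp_all add: wv_def)
  have w1: "(x - v 0) \<bullet> wv v 1 = l 1 * Dv v" "(x - v 0) \<bullet> wv v 2 = l 2 * Dv v" "(x - v 0) \<bullet> wv v 3 = l 3 * Dv v"
    unfolding xe wv inner_add_left inner_scaleR_left dots z by simp_all
  have l1: "l 1 = lam v 1 x" "l 2 = lam v 2 x" "l 3 = lam v 3 x" using D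
    by (simp_all add: lam_def w1 del: One_nat_def)
  have "k = 0 \<or> k = 1 \<or> k = 2 \<or> k = 3" using k by auto
  then show ?thesis using l0 l1 by (auto simp: lam_def)
qed

lemma bary_lam: assumes T: "tetrahedron v" shows "bary v = lam v"
proof (intro ext)
  fix i x
  have D: "Dv v \<noteq> 0" using Dv_nz[OF T] .
  have "(THE l :: nat \<Rightarrow> real. (\<forall>k\<ge>4. l k = 0) \<and> (\<Sum>k<4. l k) = 1 \<and> (\<Sum>k<4. l k *\<^sub>R v k) = x) = (\<lambda>k. lam v k x)"
  proof (rule the_equality)
    show "(\<forall>k\<ge>4. lam v k x = 0) \<and> (\<Sum>k<4. lam v k x) = 1 \<and> (\<Sum>k<4. lam v k x *\<^sub>R v k) = x"
      using lam_sum lam_comb[OF D] by (auto simp: lam_def)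
  next
    fix l :: "nat \<Rightarrow> real" assume H: "(\<forall>k\<ge>4. l k = 0) \<and> (\<Sum>k<4. l k) = 1 \<and> (\<Sum>k<4. l k *\<^sub>R v k) = x"
    show "l = (\<lambda>k. lam v k x)"
    proof (rule ext)
      fix k show "l k = lam v k x"
      proof (cases "k < 4")
        case True then show ?thesis using lam_uniq[OF D] H by blast
      next
        case False then show ?thesis using H by (simp add: lam_def)
      qed
    qed
  qed
  then show "bary v i x = lam v i x" unfolding bary_def by simp
qed

lemma poly3_lin: "poly3 1 (\<lambda>x. ((x - p) \<bullet> w) / D)"
proof -
  have "(\<lambda>x. ((x - p) \<bullet> w) / D) = (\<lambda>x. ((1/D) *\<^sub>R w) \<bullet> x + (-(p \<bullet> w) / D))"
    by (rule ext) (simp add: inner_diff_right inner_commute diff_divide_distrib)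
  then show ?thesis using poly3_affine by metis
qed

lemma poly3_bary: assumes "tetrahedron v" shows "poly3 1 (bary v k)"
proof -
  have "poly3 1 (lam v k)"
  proof (cases "k = 1 \<or> k = 2 \<or> k = 3")
    case True then show ?thesis unfolding lam_def by (simp add: poly3_lin)
  next
    case False
    show ?thesis
    proof (cases "k = 0")
      case True
      have "poly3 1 (\<lambda>x. 1 - ((x - v 0) \<bullet> wv v 1) / Dv v - ((x - v 0) \<bullet> wv v 2) / Dv v - ((x - v 0) \<bullet> wv v 3) / Dv v)"
        by (intro poly3_diff poly3_lin poly3_const) auto
      then show ?thesis using True unfolding lam_def by simp
    next
      case False2: False
      then show ?thesis using False unfolding lam_def by (simp add: poly3_zero)
    qed
  qed
  then show ?thesis using bary_lam[OF assms] by simp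
qed

lemma bary_sum: "tetrahedron v \<Longrightarrow> (\<Sum>k<4. bary v k x) = 1"
  using bary_lam lam_sum by metis
lemma bary_comb: "tetrahedron v \<Longrightarrow> (\<Sum>k<4. bary v k x *\<^sub>R v k) = x"
  using bary_lam lam_comb Dv_nz by metis
lemma bary_uniq: "tetrahedron v \<Longrightarrow> (\<Sum>k<4. l k) = 1 \<Longrightarrow> (\<Sum>k<4. l k *\<^sub>R v k) = x \<Longrightarrow> k < 4 \<Longrightarrow> bary v k x = l k"
  using bary_lam lam_uniq Dv_nz by metis

lemma in_face:
  assumes T: "tetrahedron v" and i: "i < 4" and x: "x \<in> face v i" and k: "k < 4"
  shows "bary v i x = 0" "0 \<le> bary v k x"
proof -
  have inj: "inj_on v {..<4}" using T by (simp add: tetrahedron_def)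
  let ?J = "{..<4} - {i}"
  have fin: "finite (v ` ?J)" by simp
  obtain u where u: "\<forall>y\<in>v ` ?J. 0 \<le> u y" "sum u (v ` ?J) = 1" "(\<Sum>y\<in>v ` ?J. u y *\<^sub>R y) = x"
    using x unfolding face_def convex_hull_finite[OF fin] by blast
  have injJ: "inj_on v ?J" using inj by (rule inj_on_subset) auto
  define l where "l k = (if k < 4 \<and> k \<noteq> i then u (v k) else 0)" for k
  have s1: "(\<Sum>k<4. l k) = (\<Sum>k\<in>?J. u (v k))"
    using sum.remove[of "{..<4}" i l] i by (simp add: l_def)
  have s2: "(\<Sum>k<4. l k *\<^sub>R v k) = (\<Sum>k\<in>?J. u (v k) *\<^sub>R v k)"
    using sum.remove[of "{..<4}" i "\<lambda>k. l k *\<^sub>R v k"] i by (simp add: l_def)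
  have "(\<Sum>k<4. l k) = 1" using u(2) s1 sum.reindex[OF injJ, of u] by simp
  moreover have "(\<Sum>k<4. l k *\<^sub>R v k) = x" using u(3) s2 sum.reindex[OF injJ, of "\<lambda>y. u y *\<^sub>R y"] by simp
  ultimately have b: "bary v k x = l k" if "k < 4" for k using bary_uniq[OF T] that by blast
  show "bary v i x = 0" using b[OF i] by (simp add: l_def)
  show "0 \<le> bary v k x" using b[OF k] u(1) k by (simp add: l_def)
qed

lemma to_face:
  assumes T: "tetrahedron v" and i: "i < 4" and x: "bary v i x = 0" "\<And>k. k < 4 \<Longrightarrow> 0 \<le> bary v k x"
  shows "x \<in> face v i"
proof -
  let ?J = "{..<4} - {i}"
  have "x = (\<Sum>k<4. bary v k x *\<^sub>R v k)" using bary_comb[OF T] by simp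
  also have "\<dots> = (\<Sum>k\<in>?J. bary v k x *\<^sub>R v k)"
    using sum.remove[of "{..<4}" i "\<lambda>k. bary v k x *\<^sub>R v k"] i x(1) by simp
  finally have xe: "x = (\<Sum>k\<in>?J. bary v k x *\<^sub>R v k)" .
  have s: "(\<Sum>k\<in>?J. bary v k x) = 1"
    using sum.remove[of "{..<4}" i "\<lambda>k. bary v k x"] i x(1) bary_sum[OF T] by simp
  have "(\<Sum>k\<in>?J. bary v k x *\<^sub>R v k) \<in> convex hull (v ` ?J)"
    by (rule convex_sum) (use s x(2) in \<open>auto intro: hull_inc\<close>)
  then show ?thesis using xe unfolding face_def by simp
qed

lemma cross_cross_id: fixes w n :: "real^3"
  shows "cross3 w (cross3 w n) = (w \<bullet> n) *\<^sub>R w - (w \<bullet> w) *\<^sub>R n"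
  by (simp add: cross3_simps forall_3)

lemma cross_ab_n: fixes a b n :: "real^3"
  shows "cross3 (cross3 a b) n = (a \<bullet> n) *\<^sub>R b - (b \<bullet> n) *\<^sub>R a"
  by (simp add: cross3_simps forall_3)

definition fnP :: "(nat \<Rightarrow> real^3) \<Rightarrow> nat \<Rightarrow> real^3 \<Rightarrow> bool" where
  "fnP v i n \<longleftrightarrow> norm n = 1
       \<and> (\<forall>j k. j < 4 \<and> k < 4 \<and> j \<noteq> i \<and> k \<noteq> i \<longrightarrow> n \<bullet> (v j - v k) = 0)
       \<and> n \<bullet> (v i - v (if i = 0 then 1 else 0)) < 0"

lemma others:
  assumes "i < (4::nat)"
  shows "\<exists>l m. l < 4 \<and> m < 4 \<and> distinct [(if i = 0 then 1 else 0), i, l, m]"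
proof -
  have "i = 0 \<or> i = 1 \<or> i = 2 \<or> i = 3" using assms by auto
  then show ?thesis
  proof (elim disjE)
    assume "i = 0" then show ?thesis by (intro exI[of _ 2] exI[of _ 3]) auto
  next
    assume "i = 1" then show ?thesis by (intro exI[of _ 2] exI[of _ 3]) auto
  next
    assume "i = 2" then show ?thesis by (intro exI[of _ 1] exI[of _ 3]) auto
  next
    assume "i = 3" then show ?thesis by (intro exI[of _ 1] exI[of _ 2]) auto
  qed
qed

lemma normal_ex1:
  assumes T: "tetrahedron v" and i: "i < 4"
  shows "\<exists>!n. fnP v i n"
proof -
  define j where "j = (if i = 0 then 1 else (0::nat))"
  obtain l m where lm: "l < 4" "m < 4" "distinct [j, i, l, m]" using others[OF i] unfolding j_def by blast
  have j4: "j < 4" by (simp add: j_def)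
  define a where "a = v l - v j"
  define b where "b = v m - v j"
  define w where "w = cross3 a b"
  define t where "t = (v i - v j) \<bullet> w"
  have t: "t \<noteq> 0" unfolding t_def w_def a_def b_def by (rule tri_nz[OF T j4 i lm])
  have w: "w \<noteq> 0" using t by (auto simp: t_def)
  have J: "{..<4} - {i} = {j, l, m}" using four_eq[OF j4 i lm(1,2) lm(3)] lm(3) by auto
  have orth_iff: "(\<forall>j' k'. j' < 4 \<and> k' < 4 \<and> j' \<noteq> i \<and> k' \<noteq> i \<longrightarrow> n \<bullet> (v j' - v k') = 0) \<longleftrightarrow> (n \<bullet> a = 0 \<and> n \<bullet> b = 0)" for n
  proof
    assume H: "\<forall>j' k'. j' < 4 \<and> k' < 4 \<and> j' \<noteq> i \<and> k' \<noteq> i \<longrightarrow> n \<bullet> (v j' - v k') = 0"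
    show "n \<bullet> a = 0 \<and> n \<bullet> b = 0" unfolding a_def b_def using H lm j4 by auto
  next
    assume H: "n \<bullet> a = 0 \<and> n \<bullet> b = 0"
    have e: "x \<in> {j,l,m} \<Longrightarrow> n \<bullet> (v x - v j) = 0" for x using H unfolding a_def b_def by auto
    show "\<forall>j' k'. j' < 4 \<and> k' < 4 \<and> j' \<noteq> i \<and> k' \<noteq> i \<longrightarrow> n \<bullet> (v j' - v k') = 0"
    proof (intro allI impI)
      fix j' k' assume "j' < 4 \<and> k' < 4 \<and> j' \<noteq> i \<and> k' \<noteq> i"
      then have "j' \<in> {j,l,m}" "k' \<in> {j,l,m}" using J by auto
      then have "n \<bullet> (v j' - v j) = 0" "n \<bullet> (v k' - v j) = 0" using e by auto
      then have "n \<bullet> ((v j' - v j) - (v k' - v j)) = 0" by (simp add: inner_diff_right)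
      then show "n \<bullet> (v j' - v k') = 0" by simp
    qed
  qed
  have P_iff: "fnP v i n \<longleftrightarrow> norm n = 1 \<and> n \<bullet> a = 0 \<and> n \<bullet> b = 0 \<and> n \<bullet> (v i - v j) < 0" for n
    unfolding fnP_def orth_iff j_def by simp
  define n0 where "n0 = (- sgn t / norm w) *\<^sub>R w"
  have "fnP v i n0"
    unfolding P_iff
  proof (intro conjI)
    show "norm n0 = 1" using w t by (simp add: n0_def abs_sgn)
    show "n0 \<bullet> a = 0" unfolding n0_def w_def by (simp add: dot_cross_self inner_commute)
    show "n0 \<bullet> b = 0" unfolding n0_def w_def by (simp add: dot_cross_self inner_commute)
    have "n0 \<bullet> (v i - v j) = - sgn t * t / norm w" unfolding n0_def t_def by (simp add: inner_commute)
    also have "\<dots> = - \<bar>t\<bar> / norm w" by (simp add: sgn_mult_self_eq abs_sgn sgn_mult_abs mult.commute)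
    also have "\<dots> < 0" using t w by simp
    finally show "n0 \<bullet> (v i - v j) < 0" .
  qed
  moreover have "n = n0" if "fnP v i n" for n
  proof -
    have n: "norm n = 1" "n \<bullet> a = 0" "n \<bullet> b = 0" "n \<bullet> (v i - v j) < 0" using that P_iff by auto
    have "cross3 w n = 0" unfolding w_def cross_ab_n using n by (simp add: inner_commute)
    then have "(w \<bullet> n) *\<^sub>R w - (w \<bullet> w) *\<^sub>R n = 0" using cross_cross_id[of w n] by simp
    then have eq: "(w \<bullet> n) *\<^sub>R w = (w \<bullet> w) *\<^sub>R n" by simp
    have ww: "w \<bullet> w \<noteq> 0" using w by simp
    have "n = (1 / (w \<bullet> w)) *\<^sub>R ((w \<bullet> w) *\<^sub>R n)" using ww by simp
    also have "\<dots> = (1 / (w \<bullet> w)) *\<^sub>R ((w \<bullet> n) *\<^sub>R w)" using eq by simp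
    finally have ne: "n = ((w \<bullet> n) / (w \<bullet> w)) *\<^sub>R w" by simp
    define c where "c = (w \<bullet> n) / (w \<bullet> w)"
    have nc: "n = c *\<^sub>R w" using ne c_def by simp
    have "\<bar>c\<bar> * norm w = 1" using n(1) nc by simp
    then have ac: "\<bar>c\<bar> = 1 / norm w" using w by (simp add: field_simps)
    have ct: "c * t < 0" using n(4) nc unfolding t_def by (simp add: inner_commute)
    have "c = - sgn t / norm w"
    proof (cases "t > 0")
      case True
      then have "c < 0" using ct by (simp add: mult_less_0_iff)
      then show ?thesis using ac True by simp
    next
      case False
      then have "t < 0" using t by simp
      then have "c > 0" using ct by (simp add: mult_less_0_iff)
      then show ?thesis using ac \<open>t < 0\<close> by simp
    qed
    then show ?thesis using nc n0_def by simp
  qed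
  ultimately show ?thesis by blast
qed

lemma fn_prop: assumes "tetrahedron v" "i < 4" shows "fnP v i (face_normal v i)"
proof -
  have "face_normal v i = (THE n. fnP v i n)" unfolding face_normal_def fnP_def by simp
  then show ?thesis using theI'[OF normal_ex1[OF assms]] by simp
qed

lemma fn_norm: "tetrahedron v \<Longrightarrow> i < 4 \<Longrightarrow> norm (face_normal v i) = 1"
  using fn_prop unfolding fnP_def by blast
lemma fn_orth: "tetrahedron v \<Longrightarrow> i < 4 \<Longrightarrow> j < 4 \<Longrightarrow> k < 4 \<Longrightarrow> j \<noteq> i \<Longrightarrow> k \<noteq> i \<Longrightarrow> face_normal v i \<bullet> (v j - v k) = 0"
  using fn_prop unfolding fnP_def by blast
lemma fn_sign: "tetrahedron v \<Longrightarrow> i < 4 \<Longrightarrow> face_normal v i \<bullet> (v i - v (if i = 0 then 1 else 0)) < 0"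
  using fn_prop unfolding fnP_def by blast

definition chart :: "(nat \<Rightarrow> real^3) \<Rightarrow> nat \<Rightarrow> nat \<Rightarrow> nat \<Rightarrow> nat \<Rightarrow> real^3 \<Rightarrow> real^3" where
  "chart v a b c d z = z$1 *\<^sub>R v a + z$2 *\<^sub>R v b + z$3 *\<^sub>R v c + (1 - z$1 - z$2 - z$3) *\<^sub>R v d"
definition coordm :: "(nat \<Rightarrow> real^3) \<Rightarrow> nat \<Rightarrow> nat \<Rightarrow> nat \<Rightarrow> real^3 \<Rightarrow> real^3" where
  "coordm v a b c x = vector [bary v a x, bary v b x, bary v c x]"

lemma coordm_nth[simp]: "coordm v a b c x $ 1 = bary v a x" "coordm v a b c x $ 2 = bary v b x" "coordm v a b c x $ 3 = bary v c x"
  by (simp_all add: coordm_def)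

lemma chart_poly: "poly3 1 (\<lambda>z. chart v a b c d z $ k)"
proof -
  have "poly3 1 (\<lambda>z. v a $ k * z$1 + v b $ k * z$2 + v c $ k * z$3 + v d $ k * (1 - z$1 - z$2 - z$3))"
    by (intro poly3_add poly3_cmult poly3_diff poly3_const poly3_coord) auto
  then show ?thesis by (simp add: chart_def algebra_simps)
qed

lemma coordm_poly: "tetrahedron v \<Longrightarrow> poly3 1 (\<lambda>x. coordm v a b c x $ k)"
proof -
  assume T: "tetrahedron v"
  have "k = 1 \<or> k = 2 \<or> k = 3" using exhaust_3 by blast
  then show ?thesis using poly3_bary[OF T] by (auto simp: coordm_def)
qed

lemma bary_chart:
  assumes T: "tetrahedron v" and abcd: "a < 4" "b < 4" "c < 4" "d < 4" "distinct [a,b,c,d]"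
  shows "bary v a (chart v a b c d z) = z$1" "bary v b (chart v a b c d z) = z$2"
        "bary v c (chart v a b c d z) = z$3" "bary v d (chart v a b c d z) = 1 - z$1 - z$2 - z$3"
proof -
  define l where "l k = (if k = a then z$1 else if k = b then z$2 else if k = c then z$3
     else if k = d then 1 - z$1 - z$2 - z$3 else 0)" for k
  have F: "{..<4::nat} = {a,b,c,d}" by (rule four_eq[OF abcd])
  have "(\<Sum>k<4. l k) = 1" unfolding F using abcd(5) by (simp add: l_def)
  moreover have "(\<Sum>k<4. l k *\<^sub>R v k) = chart v a b c d z" unfolding F using abcd(5) by (simp add: l_def chart_def)
  ultimately have "bary v k (chart v a b c d z) = l k" if "k < 4" for k using bary_uniq[OF T] that by blast
  then show "bary v a (chart v a b c d z) = z$1" "bary v b (chart v a b c d z) = z$2"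
        "bary v c (chart v a b c d z) = z$3" "bary v d (chart v a b c d z) = 1 - z$1 - z$2 - z$3"
    using abcd by (auto simp: l_def)
qed

lemma chart_coordm:
  assumes T: "tetrahedron v" and abcd: "a < 4" "b < 4" "c < 4" "d < 4" "distinct [a,b,c,d]"
  shows "chart v a b c d (coordm v a b c x) = x"
proof -
  have F: "{..<4::nat} = {a,b,c,d}" by (rule four_eq[OF abcd])
  have s: "bary v a x + bary v b x + bary v c x + bary v d x = 1" using bary_sum[OF T, of x] abcd(5) unfolding F by simp
  have "x = bary v a x *\<^sub>R v a + bary v b x *\<^sub>R v b + bary v c x *\<^sub>R v c + bary v d x *\<^sub>R v d"
    using bary_comb[OF T, of x] abcd(5) unfolding F by (simp add: algebra_simps)
  moreover have "bary v d x = 1 - bary v a x - bary v b x - bary v c x" using s by simp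
  ultimately show ?thesis unfolding chart_def by simp
qed

lemma z0_poly: "poly3 1 (\<lambda>z. z0 z $ k)"
proof -
  have "k = 1 \<or> k = 2 \<or> k = 3" using exhaust_3 by blast
  then show ?thesis by (auto simp: poly3_zero poly3_coord)
qed

lemma comp_nth_bound: "dist (c::real^3) y < e \<Longrightarrow> \<bar>y$k - c$k\<bar> < e"
  by (metis component_le_norm_cart dist_norm le_less_trans norm_minus_commute vector_minus_component)

lemma ext_idx:
  assumes "a < (4::nat)" obtains b c d where "b < 4" "c < 4" "d < 4" "distinct [a,b,c,d]"
proof -
  obtain l m where "l < 4" "m < 4" "distinct [(if a = 0 then 1 else 0), a, l, m]" using others[OF assms] by blast
  then show ?thesis using that[of "if a = 0 then 1 else 0" l m] by auto
qed

lemma ext_idx2: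
  assumes "a < (4::nat)" "b < 4" "a \<noteq> b" obtains c d where "c < 4" "d < 4" "distinct [a,b,c,d]"
proof -
  have "card ({..<4::nat} - {a,b}) = 2" using assms by (simp add: card_Diff_subset)
  then obtain c d where "{..<4::nat} - {a,b} = {c,d}" "c \<noteq> d" by (auto simp: card_2_iff)
  then have "c < 4" "d < 4" "distinct [a,b,c,d]" using assms by (auto simp: set_eq_iff)
  then show ?thesis using that by blast
qed

lemma face_div:
  assumes T: "tetrahedron v" and a: "a < 4" and f: "poly3 r f"
    and van: "\<And>x. bary v a x = 0 \<Longrightarrow> (\<And>k. k < 4 \<Longrightarrow> k \<noteq> a \<Longrightarrow> 0 < bary v k x) \<Longrightarrow> f x = 0"
  shows "\<exists>B. poly3 (r - 1) B \<and> (\<forall>x. f x = bary v a x * B x)"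
proof -
  obtain b c d where abcd: "b < 4" "c < 4" "d < 4" "distinct [a,b,c,d]" using ext_idx[OF a] by blast
  define h where "h z = f (chart v a b c d z)" for z
  have h: "poly3 r h" unfolding h_def by (rule poly3_compose[OF f chart_poly])
  obtain A where A: "poly3 (r - 1) A" "\<And>z. h z = h (z0 z) + z$1 * A z" using poly3_decomp1[OF h] by blast
  have g: "poly3 r (\<lambda>z. h (z0 z))" by (rule poly3_compose[OF h z0_poly])
  have g0: "h (z0 z) = 0" for z
  proof (rule poly3_zero_on_ball[OF g, of "1/8" "\<chi> i. 1/4"])
    fix y :: "real^3" assume y: "dist (\<chi> i. 1/4) y < 1/8"
    have y2: "\<bar>y$2 - 1/4\<bar> < 1/8" and y3: "\<bar>y$3 - 1/4\<bar> < 1/8"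
      using comp_nth_bound[OF y, of 2] comp_nth_bound[OF y, of 3] by auto
    let ?p = "chart v a b c d (z0 y)"
    have bc: "bary v a ?p = 0" "bary v b ?p = y$2" "bary v c ?p = y$3" "bary v d ?p = 1 - y$2 - y$3"
      using bary_chart[OF T a abcd, of "z0 y"] by auto
    have F: "{..<4::nat} = {a,b,c,d}" by (rule four_eq[OF a abcd])
    have "f ?p = 0"
    proof (rule van)
      show "bary v a ?p = 0" by (rule bc(1))
      fix k assume "k < 4" "k \<noteq> a"
      then have "k = b \<or> k = c \<or> k = d" using F by auto
      moreover have "0 < y$2" "0 < y$3" "y$2 + y$3 < 1" using y2 y3 by (auto simp only: abs_less_iff)
      ultimately show "0 < bary v k ?p" using bc by auto
    qed
    then show "h (z0 y) = 0" by (simp add: h_def)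
  qed simp
  define B where "B x = A (coordm v a b c x)" for x
  have "poly3 (r - 1) B" unfolding B_def by (rule poly3_compose[OF A(1) coordm_poly[OF T]])
  moreover have "f x = bary v a x * B x" for x
  proof -
    have "f x = h (coordm v a b c x)" unfolding h_def using chart_coordm[OF T a abcd] by simp
    also have "\<dots> = bary v a x * B x" using A(2) g0 by (simp add: B_def)
    finally show ?thesis .
  qed
  ultimately show ?thesis by blast
qed

definition z2z :: "real^3 \<Rightarrow> real^3" where "z2z z = (\<chi> i. if i = 2 then 0 else z$i)"
lemma z2z_nth[simp]: "z2z z $ 1 = z $ 1" "z2z z $ 2 = 0" "z2z z $ 3 = z $ 3"
  by (auto simp: z2z_def)
lemma z2z_poly: "poly3 1 (\<lambda>z. z2z z $ k)"
proof -
  have "k = 1 \<or> k = 2 \<or> k = 3" using exhaust_3 by blast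
  then show ?thesis by (auto simp: poly3_zero poly3_coord)
qed

lemma edge_div:
  assumes T: "tetrahedron v" and ab: "a < 4" "b < 4" "a \<noteq> b" and f: "poly3 r f"
    and van: "\<And>x. bary v a x = 0 \<Longrightarrow> bary v b x = 0 \<Longrightarrow> (\<And>k. k < 4 \<Longrightarrow> k \<noteq> a \<Longrightarrow> k \<noteq> b \<Longrightarrow> 0 < bary v k x) \<Longrightarrow> f x = 0"
  shows "\<exists>B. poly3 (r - 1) B \<and> (\<forall>x. bary v a x = 0 \<longrightarrow> f x = bary v b x * B x)"
proof -
  obtain c d where cd: "c < 4" "d < 4" "distinct [b,a,c,d]" using ext_idx2[of b a] ab by (metis distinct_length_2_or_more)
  define h where "h z = f (chart v b a c d (z2z z))" for z
  have h: "poly3 r h" unfolding h_def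
    by (rule poly3_compose[OF f, of "\<lambda>z. chart v b a c d (z2z z)"]) (rule poly3_compose[OF chart_poly z2z_poly])
  obtain A where A: "poly3 (r - 1) A" "\<And>z. h z = h (z0 z) + z$1 * A z" using poly3_decomp1[OF h] by blast
  have g: "poly3 r (\<lambda>z. h (z0 z))" by (rule poly3_compose[OF h z0_poly])
  have g0: "h (z0 z) = 0" for z
  proof (rule poly3_zero_on_ball[OF g, of "1/4" "\<chi> i. 1/2"])
    fix y :: "real^3" assume y: "dist (\<chi> i. 1/2) y < 1/4"
    have y3: "\<bar>y$3 - 1/2\<bar> < 1/4" using comp_nth_bound[OF y, of 3] by auto
    let ?p = "chart v b a c d (z2z (z0 y))"
    have bc: "bary v b ?p = 0" "bary v a ?p = 0" "bary v c ?p = y$3" "bary v d ?p = 1 - y$3"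
      using bary_chart[OF T ab(2) ab(1) cd, of "z2z (z0 y)"] by auto
    have F: "{..<4::nat} = {b,a,c,d}" by (rule four_eq[OF ab(2) ab(1) cd])
    have "f ?p = 0"
    proof (rule van)
      show "bary v a ?p = 0" "bary v b ?p = 0" by (rule bc(2), rule bc(1))
      fix k assume "k < 4" "k \<noteq> a" "k \<noteq> b"
      then have "k = c \<or> k = d" using F by auto
      moreover have "0 < y$3" "y$3 < 1" using y3 by (auto simp only: abs_less_iff)
      ultimately show "0 < bary v k ?p" using bc by auto
    qed
    then show "h (z0 y) = 0" by (simp add: h_def)
  qed simp
  define B where "B x = A (coordm v b a c x)" for x
  have "poly3 (r - 1) B" unfolding B_def by (rule poly3_compose[OF A(1) coordm_poly[OF T]])
  moreover have "f x = bary v b x * B x" if x: "bary v a x = 0" for x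
  proof -
    have "z2z (coordm v b a c x) = coordm v b a c x" using x by (simp add: vec_eq_iff forall_3)
    then have "f x = h (coordm v b a c x)" unfolding h_def using chart_coordm[OF T ab(2) ab(1) cd] by simp
    also have "\<dots> = bary v b x * B x" using A(2) g0 by (simp add: B_def)
    finally show ?thesis .
  qed
  ultimately show ?thesis by blast
qed

lemma par_of_cross0:
  fixes e n :: "real^3" assumes "cross3 e n = 0" "norm n = 1"
  shows "e = (e \<bullet> n) *\<^sub>R n"
proof -
  have "cross3 n (cross3 n e) = (n \<bullet> e) *\<^sub>R n - (n \<bullet> n) *\<^sub>R e" by (rule cross_cross_id)
  moreover have "cross3 n e = 0" using assms(1) cross_skew[of e n] by simp
  moreover have "n \<bullet> n = 1" using assms(2) by (simp add: dot_square_norm)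
  ultimately show ?thesis by (simp add: inner_commute)
qed

lemma transversal:
  assumes T: "tetrahedron v" and ij: "i < 4" "j < 4" "i \<noteq> j"
  shows "\<exists>u. face_normal v j \<bullet> u = 0 \<and> face_normal v i \<bullet> u \<noteq> 0"
proof -
  obtain l m where lm: "l < 4" "m < 4" "distinct [i,j,l,m]" using ext_idx2[OF ij] by blast
  define r where "r = (if i = 0 then 1 else (0::nat))"
  have r: "r < 4" "r \<noteq> i" by (auto simp: r_def)
  have "face_normal v i \<bullet> (v i - v l) = face_normal v i \<bullet> (v i - v r) + face_normal v i \<bullet> (v r - v l)"
    by (simp add: inner_diff_right)
  also have "face_normal v i \<bullet> (v r - v l) = 0" using fn_orth[OF T ij(1) r(1) lm(1)] r lm by auto
  finally have "face_normal v i \<bullet> (v i - v l) < 0" using fn_sign[OF T ij(1)] by (simp add: r_def)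
  moreover have "face_normal v j \<bullet> (v i - v l) = 0" using fn_orth[OF T ij(2) ij(1) lm(1)] ij lm by auto
  ultimately show ?thesis by (metis less_irrefl)
qed

lemma edge_zero:
  assumes T: "tetrahedron v" and ij: "i < 4" "j < 4" "i \<noteq> j"
    and tang: "\<forall>i<4. \<forall>x\<in>face v i. cross3 (E x) (face_normal v i) = 0"
    and x: "x \<in> face v i" "x \<in> face v j"
  shows "E x = 0"
proof -
  have ei: "E x = (E x \<bullet> face_normal v i) *\<^sub>R face_normal v i"
    by (rule par_of_cross0) (use tang ij x fn_norm[OF T] in auto)
  have ej: "E x = (E x \<bullet> face_normal v j) *\<^sub>R face_normal v j"
    by (rule par_of_cross0) (use tang ij x fn_norm[OF T] in auto)
  obtain u where u: "face_normal v j \<bullet> u = 0" "face_normal v i \<bullet> u \<noteq> 0" using transversal[OF T ij] by blast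
  have "(E x \<bullet> face_normal v i) * (face_normal v i \<bullet> u) = E x \<bullet> u" using ei by (metis inner_scaleR_left)
  also have "\<dots> = 0" using ej u(1) by (metis inner_scaleR_left mult_zero_right)
  finally have "E x \<bullet> face_normal v i = 0" using u(2) by simp
  then show ?thesis using ei by simp
qed

lemma normals_N_nz:
  assumes T: "tetrahedron v"
  shows "face_normal v 1 \<bullet> cross3 (face_normal v 2) (face_normal v 3) \<noteq> 0"
proof
  let ?n1 = "face_normal v 1" and ?n2 = "face_normal v 2" and ?n3 = "face_normal v 3"
  assume N: "?n1 \<bullet> cross3 ?n2 ?n3 = 0"
  let ?w = "cross3 ?n2 ?n3"
  have cr: "0 = (?w \<bullet> ?w) *\<^sub>R ?n1 + (?w \<bullet> cross3 ?n3 ?n1) *\<^sub>R ?n2 + (?w \<bullet> cross3 ?n1 ?n2) *\<^sub>R ?n3"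
    using cramer[of ?n1 ?n2 ?n3 ?w] N by simp
  have o2: "?n2 \<bullet> (v 1 - v 0) = 0" by (rule fn_orth[OF T]) auto
  have o3: "?n3 \<bullet> (v 1 - v 0) = 0" by (rule fn_orth[OF T]) auto
  have s1: "?n1 \<bullet> (v 1 - v 0) < 0" using fn_sign[OF T, of 1] by simp
  have "0 = ((?w \<bullet> ?w) *\<^sub>R ?n1 + (?w \<bullet> cross3 ?n3 ?n1) *\<^sub>R ?n2 + (?w \<bullet> cross3 ?n1 ?n2) *\<^sub>R ?n3) \<bullet> (v 1 - v 0)"
    using cr by (metis inner_zero_left)
  also have "\<dots> = (?w \<bullet> ?w) * (?n1 \<bullet> (v 1 - v 0))" using o2 o3 by (simp add: inner_add_left)
  finally have "?w \<bullet> ?w = 0" using s1 by simp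
  then have w0: "?w = 0" by simp
  have "cross3 ?n3 (cross3 ?n3 ?n2) = (?n3 \<bullet> ?n2) *\<^sub>R ?n3 - (?n3 \<bullet> ?n3) *\<^sub>R ?n2" by (rule cross_cross_id)
  moreover have "cross3 ?n3 ?n2 = 0" using w0 cross_skew[of ?n3 ?n2] by simp
  moreover have "?n3 \<bullet> ?n3 = 1" using fn_norm[OF T, of 3] by (simp add: dot_square_norm)
  ultimately have e: "?n2 = (?n3 \<bullet> ?n2) *\<^sub>R ?n3" by simp
  have o32: "?n3 \<bullet> (v 2 - v 0) = 0" by (rule fn_orth[OF T]) auto
  have "?n2 \<bullet> (v 2 - v 0) = (?n3 \<bullet> ?n2) * (?n3 \<bullet> (v 2 - v 0))" using e by (metis inner_scaleR_left)
  then have "?n2 \<bullet> (v 2 - v 0) = 0" using o32 by simp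
  moreover have "?n2 \<bullet> (v 2 - v 0) < 0" using fn_sign[OF T, of 2] by simp
  ultimately show False by simp
qed

lemma prod4: "(\<Prod>k<4::nat. f k) = f 0 * f 1 * f 2 * (f 3::'a::comm_monoid_mult)"
  by (simp add: eval_nat_numeral)

lemma poly3_inner: assumes "vpoly3 r E" shows "poly3 r (\<lambda>x. E x \<bullet> w)"
proof -
  have "poly3 r (\<lambda>x. \<Sum>k\<in>UNIV. w $ k * E x $ k)"
    by (rule poly3_sum) (use assms in \<open>auto simp: vpoly3_def intro: poly3_cmult\<close>)
  then show ?thesis by (simp add: inner_vec_def mult.commute)
qed

lemma relint_faces:
  assumes T: "tetrahedron v" and "i < 4" "a < 4" "bary v i x = 0" "bary v a x = 0"
    and pos: "\<And>k. k < 4 \<Longrightarrow> k \<noteq> i \<Longrightarrow> k \<noteq> a \<Longrightarrow> 0 < bary v k x"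
  shows "x \<in> face v i" "x \<in> face v a"
proof -
  have nn: "0 \<le> bary v k x" if "k < 4" for k
    using pos[OF that] assms(4,5) by (cases "k = i \<or> k = a") auto
  show "x \<in> face v i" by (rule to_face[OF T assms(2,4) nn])
  show "x \<in> face v a" by (rule to_face[OF T assms(3,5) nn])
qed

lemma q_exists:
  assumes T: "tetrahedron v" and E: "vpoly3 (int p) E"
    and tang: "\<forall>i<4. \<forall>x\<in>face v i. cross3 (E x) (face_normal v i) = 0"
    and i: "i < 4"
  shows "\<exists>q. poly3 (int p - 3) q \<and> (\<forall>x. bary v i x = 0 \<longrightarrow> E x \<bullet> face_normal v i = (\<Prod>k\<in>{..<4} - {i}. bary v k x) * q x)"
proof -
  obtain j l m where jlm: "j < 4" "l < 4" "m < 4" "distinct [i,j,l,m]" using ext_idx[OF i] by blast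
  define f where "f x = E x \<bullet> face_normal v i" for x
  have f: "poly3 (int p) f" unfolding f_def by (rule poly3_inner[OF E])
  have Ez: "E x = 0" if "bary v i x = 0" "bary v a x = 0" "a < 4" "a \<noteq> i"
      "\<And>k. k < 4 \<Longrightarrow> k \<noteq> i \<Longrightarrow> k \<noteq> a \<Longrightarrow> 0 < bary v k x" for x a
    using relint_faces[OF T i that(3,1,2) that(5)] edge_zero[OF T i that(3) that(4)[symmetric] tang] by blast
  obtain B1 where B1: "poly3 (int p - 1) B1" "\<And>x. bary v i x = 0 \<Longrightarrow> f x = bary v j x * B1 x"
  proof -
    have "\<exists>B. poly3 (int p - 1) B \<and> (\<forall>x. bary v i x = 0 \<longrightarrow> f x = bary v j x * B x)"
    proof (rule edge_div[OF T i jlm(1) _ f])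
      show "i \<noteq> j" using jlm by auto
      fix x assume "bary v i x = 0" "bary v j x = 0" "\<And>k. k < 4 \<Longrightarrow> k \<noteq> i \<Longrightarrow> k \<noteq> j \<Longrightarrow> 0 < bary v k x"
      then have "E x = 0" using Ez[of x j] jlm by auto
      then show "f x = 0" by (simp add: f_def)
    qed
    then show ?thesis using that by blast
  qed
  obtain B2 where B2: "poly3 (int p - 1 - 1) B2" "\<And>x. bary v i x = 0 \<Longrightarrow> B1 x = bary v l x * B2 x"
  proof -
    have "\<exists>B. poly3 (int p - 1 - 1) B \<and> (\<forall>x. bary v i x = 0 \<longrightarrow> B1 x = bary v l x * B x)"
    proof (rule edge_div[OF T i jlm(2) _ B1(1)])
      show "i \<noteq> l" using jlm by auto
      fix x assume x: "bary v i x = 0" "bary v l x = 0" "\<And>k. k < 4 \<Longrightarrow> k \<noteq> i \<Longrightarrow> k \<noteq> l \<Longrightarrow> 0 < bary v k x"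
      then have "E x = 0" using Ez[of x l] jlm by auto
      then have "bary v j x * B1 x = 0" using B1(2)[OF x(1)] by (simp add: f_def)
      moreover have "0 < bary v j x" using x(3)[of j] jlm by auto
      ultimately show "B1 x = 0" by simp
    qed
    then show ?thesis using that by blast
  qed
  obtain B3 where B3: "poly3 (int p - 1 - 1 - 1) B3" "\<And>x. bary v i x = 0 \<Longrightarrow> B2 x = bary v m x * B3 x"
  proof -
    have "\<exists>B. poly3 (int p - 1 - 1 - 1) B \<and> (\<forall>x. bary v i x = 0 \<longrightarrow> B2 x = bary v m x * B x)"
    proof (rule edge_div[OF T i jlm(3) _ B2(1)])
      show "i \<noteq> m" using jlm by auto
      fix x assume x: "bary v i x = 0" "bary v m x = 0" "\<And>k. k < 4 \<Longrightarrow> k \<noteq> i \<Longrightarrow> k \<noteq> m \<Longrightarrow> 0 < bary v k x"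
      then have "E x = 0" using Ez[of x m] jlm by auto
      then have "bary v j x * (bary v l x * B2 x) = 0" using B1(2)[OF x(1)] B2(2)[OF x(1)] by (simp add: f_def)
      moreover have "0 < bary v j x" "0 < bary v l x" using x(3)[of j] x(3)[of l] jlm by auto
      ultimately show "B2 x = 0" by simp
    qed
    then show ?thesis using that by blast
  qed
  have J: "{..<4} - {i} = {j,l,m}" using four_eq[OF i jlm] jlm(4) by auto
  have "poly3 (int p - 3) B3" using B3(1) by (simp add: algebra_simps)
  moreover have "E x \<bullet> face_normal v i = (\<Prod>k\<in>{..<4} - {i}. bary v k x) * B3 x" if "bary v i x = 0" for x
    unfolding J using jlm(4) B1(2)[OF that] B2(2)[OF that] B3(2)[OF that] by (simp add: f_def mult_ac)
  ultimately show ?thesis by blast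
qed

lemma vanish4:
  assumes T: "tetrahedron v" and e: "poly3 r e" and van: "\<And>i x. i < 4 \<Longrightarrow> x \<in> face v i \<Longrightarrow> e x = 0"
  shows "\<exists>g. poly3 (r - 4) g \<and> (\<forall>x. e x = (\<Prod>k<4. bary v k x) * g x)"
proof -
  have inF: "x \<in> face v a" if "a < 4" "bary v a x = 0" "\<And>k. k < 4 \<Longrightarrow> k \<noteq> a \<Longrightarrow> 0 < bary v k x" for a x
  proof (rule to_face[OF T that(1,2)])
    fix k :: nat assume "k < 4" then show "0 \<le> bary v k x" using that by (cases "k = a") (auto intro: less_imp_le)
  qed
  obtain g0 where g0: "poly3 (r - 1) g0" "\<And>x. e x = bary v 0 x * g0 x"
    using face_div[OF T _ e, of 0] inF van by (metis zero_less_numeral)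
  obtain g1 where g1: "poly3 (r - 1 - 1) g1" "\<And>x. g0 x = bary v 1 x * g1 x"
  proof -
    have "\<exists>B. poly3 (r - 1 - 1) B \<and> (\<forall>x. g0 x = bary v 1 x * B x)"
    proof (rule face_div[OF T _ g0(1)])
      fix x assume x: "bary v 1 x = 0" "\<And>k. k < 4 \<Longrightarrow> k \<noteq> 1 \<Longrightarrow> 0 < bary v k x"
      have "e x = 0" using van[of 1 x] inF[of 1 x] x by simp
      then show "g0 x = 0" using g0(2)[of x] x(2)[of 0] by simp
    qed simp
    then show ?thesis using that by blast
  qed
  obtain g2 where g2: "poly3 (r - 1 - 1 - 1) g2" "\<And>x. g1 x = bary v 2 x * g2 x"
  proof -
    have "\<exists>B. poly3 (r - 1 - 1 - 1) B \<and> (\<forall>x. g1 x = bary v 2 x * B x)"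
    proof (rule face_div[OF T _ g1(1)])
      fix x assume x: "bary v 2 x = 0" "\<And>k. k < 4 \<Longrightarrow> k \<noteq> 2 \<Longrightarrow> 0 < bary v k x"
      have "e x = 0" using van[of 2 x] inF[of 2 x] x by simp
      then show "g1 x = 0" using g0(2)[of x] g1(2)[of x] x(2)[of 0] x(2)[of 1] by simp
    qed simp
    then show ?thesis using that by blast
  qed
  obtain g3 where g3: "poly3 (r - 1 - 1 - 1 - 1) g3" "\<And>x. g2 x = bary v 3 x * g3 x"
  proof -
    have "\<exists>B. poly3 (r - 1 - 1 - 1 - 1) B \<and> (\<forall>x. g2 x = bary v 3 x * B x)"
    proof (rule face_div[OF T _ g2(1)])
      fix x assume x: "bary v 3 x = 0" "\<And>k. k < 4 \<Longrightarrow> k \<noteq> 3 \<Longrightarrow> 0 < bary v k x"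
      have "e x = 0" using van[of 3 x] inF[of 3 x] x by simp
      then show "g2 x = 0" using g0(2)[of x] g1(2)[of x] g2(2)[of x] x(2)[of 0] x(2)[of 1] x(2)[of 2] by simp
    qed simp
    then show ?thesis using that by blast
  qed
  have "poly3 (r - 4) g3" using g3(1) by (simp add: algebra_simps)
  moreover have "e x = (\<Prod>k<4. bary v k x) * g3 x" for x
    using g0(2)[of x] g1(2)[of x] g2(2)[of x] g3(2)[of x] by (simp add: prod4 mult_ac)
  ultimately show ?thesis by blast
qed

lemma card_others: "i < (4::nat) \<Longrightarrow> card ({..<4} - {i}) = 3"
  by (simp add: card_Diff_singleton)

lemma prod_others_zero:
  assumes "i < 4" "i' < 4" "i' \<noteq> i" "bary v i x = 0"
  shows "(\<Prod>k\<in>{..<4} - {i'}. bary v k x) = 0"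
  using assms by (intro prod_zero) auto

lemma sum_single:
  assumes "i < (4::nat)" "\<And>i'. i' < 4 \<Longrightarrow> i' \<noteq> i \<Longrightarrow> f i' = 0"
  shows "(\<Sum>i'<4. f i') = (f i :: real^3)"
proof -
  have "(\<Sum>i'<4. f i') = f i + (\<Sum>i'\<in>{..<4} - {i}. f i')" using sum.remove[of "{..<4}" i f] assms(1) by simp
  also have "(\<Sum>i'\<in>{..<4} - {i}. f i') = 0" using assms(2) by (intro sum.neutral) auto
  finally show ?thesis by simp
qed

lemma prod_split: "k < 4 \<Longrightarrow> (\<Prod>j<4. g j) = g k * (\<Prod>j\<in>{..<4::nat} - {k}. (g j::real))"
  using prod.remove[of "{..<4::nat}" k g] by simp

theorem mainTheorem6:
  fixes v :: "nat \<Rightarrow> real^3" and p :: nat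
  assumes "tetrahedron v"
  shows "Sigma_c v p = P_ring_Lambda1 v p"
proof
  note T = assms
  let ?b = "\<lambda>i x. \<Prod>k\<in>{..<4} - {i}. bary v k x"
  let ?n = "face_normal v"
  show "Sigma_c v p \<subseteq> P_ring_Lambda1 v p"
  proof
    fix E assume "E \<in> Sigma_c v p"
    then obtain q where q: "\<forall>i<4. poly3 (int p - 3) (q i)"
      and E: "E = (\<lambda>x. \<Sum>i<4. (q i x * ?b i x) *\<^sub>R ?n i)"
      unfolding Sigma_c_def by blast
    have "vpoly3 (int p) E"
      unfolding vpoly3_def
    proof
      fix j
      have "poly3 (int p) (\<lambda>x. \<Sum>i<4. ?n i $ j * (q i x * ?b i x))"
      proof (rule poly3_sum)
        fix i assume i: "i \<in> {..<4::nat}"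
        have "poly3 (int p - 3 + int (card ({..<4} - {i}))) (\<lambda>x. q i x * ?b i x)"
          by (rule poly3_mult[OF _ poly3_prod]) (use q i poly3_bary[OF T] in auto)
        then show "poly3 (int p) (\<lambda>x. ?n i $ j * (q i x * ?b i x))"
          using i card_others[of i] by (auto intro: poly3_cmult)
      qed simp
      then show "poly3 (int p) (\<lambda>x. E x $ j)" unfolding E by (simp add: sum_component mult.commute)
    qed
    moreover have "\<forall>i<4. \<forall>x\<in>face v i. cross3 (E x) (?n i) = 0"
    proof (intro allI impI ballI)
      fix i x assume i: "i < (4::nat)" and x: "x \<in> face v i"
      have bi: "bary v i x = 0" using in_face(1)[OF T i x i] .
      have "E x = (q i x * ?b i x) *\<^sub>R ?n i"
        unfolding E by (rule sum_single[OF i]) (use prod_others_zero[OF i _ _ bi] in simp)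
      then show "cross3 (E x) (?n i) = 0" by (simp add: cross_mult_left)
    qed
    ultimately show "E \<in> P_ring_Lambda1 v p" unfolding P_ring_Lambda1_def by blast
  qed
  show "P_ring_Lambda1 v p \<subseteq> Sigma_c v p"
  proof
    fix E assume "E \<in> P_ring_Lambda1 v p"
    then have Ep: "vpoly3 (int p) E" and tang: "\<forall>i<4. \<forall>x\<in>face v i. cross3 (E x) (?n i) = 0"
      unfolding P_ring_Lambda1_def by auto
    have "\<forall>i. \<exists>q. i < 4 \<longrightarrow> poly3 (int p - 3) q \<and> (\<forall>x. bary v i x = 0 \<longrightarrow> E x \<bullet> ?n i = ?b i x * q x)"
      using q_exists[OF T Ep tang] by blast
    then obtain Q where Q: "\<And>i. i < 4 \<Longrightarrow> poly3 (int p - 3) (Q i)"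
        "\<And>i x. i < 4 \<Longrightarrow> bary v i x = 0 \<Longrightarrow> E x \<bullet> ?n i = ?b i x * Q i x"
      by metis
    define E0 where "E0 x = E x - (\<Sum>i<4. (Q i x * ?b i x) *\<^sub>R ?n i)" for x
    have E0face: "E0 x = 0" if i: "i < 4" and x: "x \<in> face v i" for i x
    proof -
      have bi: "bary v i x = 0" using in_face(1)[OF T i x i] .
      have "E x = (E x \<bullet> ?n i) *\<^sub>R ?n i" by (rule par_of_cross0) (use tang i x fn_norm[OF T i] in auto)
      also have "\<dots> = (Q i x * ?b i x) *\<^sub>R ?n i" using Q(2)[OF i bi] by (simp add: mult.commute)
      also have "\<dots> = (\<Sum>i<4. (Q i x * ?b i x) *\<^sub>R ?n i)"
        by (rule sum_single[OF i, symmetric]) (use prod_others_zero[OF i _ _ bi] in simp)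
      finally show ?thesis by (simp add: E0_def)
    qed
    have E0p: "poly3 (int p) (\<lambda>x. E0 x $ j)" for j
    proof -
      have "poly3 (int p) (\<lambda>x. E x $ j - (\<Sum>i<4. ?n i $ j * (Q i x * ?b i x)))"
      proof (rule poly3_diff)
        show "poly3 (int p) (\<lambda>x. E x $ j)" using Ep by (simp add: vpoly3_def)
        show "poly3 (int p) (\<lambda>x. \<Sum>i<4. ?n i $ j * (Q i x * ?b i x))"
        proof (rule poly3_sum)
          fix i assume i: "i \<in> {..<4::nat}"
          have "poly3 (int p - 3 + int (card ({..<4} - {i}))) (\<lambda>x. Q i x * ?b i x)"
            by (rule poly3_mult[OF _ poly3_prod]) (use Q i poly3_bary[OF T] in auto)
          then show "poly3 (int p) (\<lambda>x. ?n i $ j * (Q i x * ?b i x))"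
            using i card_others[of i] by (auto intro: poly3_cmult)
        qed simp
      qed
      then show ?thesis by (simp add: E0_def sum_component mult.commute)
    qed
    have "\<forall>j. \<exists>g. poly3 (int p - 4) g \<and> (\<forall>x. E0 x $ j = (\<Prod>k<4. bary v k x) * g x)"
    proof
      fix j
      show "\<exists>g. poly3 (int p - 4) g \<and> (\<forall>x. E0 x $ j = (\<Prod>k<4. bary v k x) * g x)"
        by (rule vanish4[OF T E0p]) (simp add: E0face)
    qed
    then obtain G where G: "\<And>j. poly3 (int p - 4) (G j)" "\<And>j x. E0 x $ j = (\<Prod>k<4. bary v k x) * G j x"
      by metis
    define Gv where "Gv x = (\<chi> j. G j x)" for x
    have Gvp: "vpoly3 (int p - 4) Gv" using G(1) by (simp add: vpoly3_def Gv_def)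
    have E0G: "E0 x = (\<Prod>k<4. bary v k x) *\<^sub>R Gv x" for x by (simp add: vec_eq_iff Gv_def G(2))
    define N where "N = ?n 1 \<bullet> cross3 (?n 2) (?n 3)"
    have N: "N \<noteq> 0" unfolding N_def by (rule normals_N_nz[OF T])
    define W where "W k = (if k = 1 then cross3 (?n 2) (?n 3) else if k = 2 then cross3 (?n 3) (?n 1) else cross3 (?n 1) (?n 2))" for k :: nat
    define r where "r k x = (1 / N) * (Gv x \<bullet> W k)" for k x
    have rp: "poly3 (int p - 4) (r k)" for k unfolding r_def by (intro poly3_cmult poly3_inner[OF Gvp])
    have Gdec: "Gv x = r 1 x *\<^sub>R ?n 1 + r 2 x *\<^sub>R ?n 2 + r 3 x *\<^sub>R ?n 3" for x
    proof -
      have "N *\<^sub>R Gv x = (Gv x \<bullet> W 1) *\<^sub>R ?n 1 + (Gv x \<bullet> W 2) *\<^sub>R ?n 2 + (Gv x \<bullet> W 3) *\<^sub>R ?n 3"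
        unfolding N_def W_def using cramer[of "?n 1" "?n 2" "?n 3" "Gv x"] by simp
      then have "(1/N) *\<^sub>R (N *\<^sub>R Gv x) = (1/N) *\<^sub>R ((Gv x \<bullet> W 1) *\<^sub>R ?n 1 + (Gv x \<bullet> W 2) *\<^sub>R ?n 2 + (Gv x \<bullet> W 3) *\<^sub>R ?n 3)"
        by simp
      then show ?thesis using N by (simp add: r_def scaleR_add_right)
    qed
    define q' where "q' i x = Q i x + (if i = 0 then 0 else bary v i x * r i x)" for i x
    have q'p: "poly3 (int p - 3) (q' i)" if i: "i < 4" for i
    proof (cases "i = 0")
      case True
      have "q' i = Q i" by (rule ext) (simp add: q'_def True)
      then show ?thesis using Q(1)[OF i] by simp
    next
      case False
      have "poly3 (1 + (int p - 4)) (\<lambda>x. bary v i x * r i x)" by (rule poly3_mult[OF poly3_bary[OF T] rp])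
      then have "poly3 (int p - 3) (\<lambda>x. bary v i x * r i x)" by (simp add: algebra_simps)
      moreover have "q' i = (\<lambda>x. Q i x + bary v i x * r i x)" by (rule ext) (simp add: q'_def False)
      ultimately show ?thesis using Q(1)[OF i] by (simp add: poly3_add)
    qed
    have Erep: "E x = (\<Sum>i<4. (q' i x * ?b i x) *\<^sub>R ?n i)" for x
    proof -
      let ?P = "\<Prod>k<4. bary v k x"
      have split: "?P = bary v i x * ?b i x" if "i < 4" for i using prod_split[OF that] .
      have "(\<Sum>i<4. (q' i x * ?b i x) *\<^sub>R ?n i) = (\<Sum>i<4. (Q i x * ?b i x) *\<^sub>R ?n i)
            + (\<Sum>i<4. ((if i = 0 then 0 else bary v i x * r i x) * ?b i x) *\<^sub>R ?n i)"
        unfolding q'_def sum.distrib[symmetric] by (rule sum.cong) (auto simp: algebra_simps)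
      also have "(\<Sum>i<4. ((if i = 0 then 0 else bary v i x * r i x) * ?b i x) *\<^sub>R ?n i)
          = (r 1 x * ?P) *\<^sub>R ?n 1 + (r 2 x * ?P) *\<^sub>R ?n 2 + (r 3 x * ?P) *\<^sub>R ?n 3"
        using split[of 1] split[of 2] split[of 3] by (simp add: sum4 mult_ac)
      also have "\<dots> = E0 x" unfolding E0G Gdec by (simp add: scaleR_add_right mult.commute)
      finally show ?thesis by (simp add: E0_def)
    qed
    show "E \<in> Sigma_c v p"
      unfolding Sigma_c_def using q'p Erep by blast
  qed
qed

end
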